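(* Let $J$ be a non-degenerate interval and $f_{1,\infty}$ a commutative $m$-periodic sequence of continuous surjective self-maps of $J$. If $(J,f_{1,\infty})$ is weakly mixing, then $(J,f_{1,\infty})$ is Devaney chaotic.
   Context: Commutative: $f_i\circ f_j=f_j\circ f_i$ for all $i,j$. $m$-periodic: $f_{n+m}=f_n$ for all $n$. Write $f_1^n=f_n\circ\cdots\circ f_1$. Weakly mixing: for all non-empty open $U_1,U_2,V_1,V_2$ there is $n$ with $f_1^n(U_i)\cap V_i\ne\emptyset$, $i=1,2$. Topologically transitive: for all non-empty open $U,V$ some $n$ with $f_1^n(U)\cap V\ne\emptyset$. A point $x$ is periodic if there is $n$ with $f_1^{nk}(x)=x$ for every $k\in\mathbb{N}$. Sensitive: there is $\delta>0$ such that for every $x$ and every neighbourhood $U$ of $x$ there are $y\in U$, $n\in\mathbb{N}$ with $|f_1^n(x)-f_1^n(y)|>\delta$. Devaney chaotic: topologically transitive, dense set of periodic points, and sensitive. *)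

theory Defs
  imports "HOL-Analysis.Analysis"
begin

text \<open>Non-autonomous system on J given by a sequence f 1, f 2, ... (index 0 unused).
  iter_seq f n = f n o ... o f 1, with iter_seq f 0 = id.\<close>
fun iter_seq :: "(nat \<Rightarrow> real \<Rightarrow> real) \<Rightarrow> nat \<Rightarrow> real \<Rightarrow> real" where
  "iter_seq f 0 = id"
| "iter_seq f (Suc n) = f (Suc n) \<circ> iter_seq f n"

definition nondegenerate_interval :: "real set \<Rightarrow> bool" where
  "nondegenerate_interval J \<longleftrightarrow> is_interval J \<and> (\<exists>a\<in>J. \<exists>b\<in>J. a < b)"

definition commutative_seq :: "real set \<Rightarrow> (nat \<Rightarrow> real \<Rightarrow> real) \<Rightarrow> bool" where
  "commutative_seq J f \<longleftrightarrow> (\<forall>i\<ge>1. \<forall>j\<ge>1. \<forall>x\<in>J. f i (f j x) = f j (f i x))"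

definition periodic_seq :: "real set \<Rightarrow> nat \<Rightarrow> (nat \<Rightarrow> real \<Rightarrow> real) \<Rightarrow> bool" where
  "periodic_seq J m f \<longleftrightarrow> m \<ge> 1 \<and> (\<forall>n\<ge>1. \<forall>x\<in>J. f (n + m) x = f n x)"

definition weakly_mixing :: "real set \<Rightarrow> (nat \<Rightarrow> real \<Rightarrow> real) \<Rightarrow> bool" where
  "weakly_mixing J f \<longleftrightarrow>
    (\<forall>U1 U2 V1 V2. openin (top_of_set J) U1 \<and> U1 \<noteq> {} \<and> openin (top_of_set J) U2 \<and> U2 \<noteq> {}
       \<and> openin (top_of_set J) V1 \<and> V1 \<noteq> {} \<and> openin (top_of_set J) V2 \<and> V2 \<noteq> {}
       \<longrightarrow> (\<exists>n\<ge>1. iter_seq f n ` U1 \<inter> V1 \<noteq> {} \<and> iter_seq f n ` U2 \<inter> V2 \<noteq> {}))"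

definition top_transitive :: "real set \<Rightarrow> (nat \<Rightarrow> real \<Rightarrow> real) \<Rightarrow> bool" where
  "top_transitive J f \<longleftrightarrow>
    (\<forall>U V. openin (top_of_set J) U \<and> U \<noteq> {} \<and> openin (top_of_set J) V \<and> V \<noteq> {}
       \<longrightarrow> (\<exists>n\<ge>1. iter_seq f n ` U \<inter> V \<noteq> {}))"

definition periodic_point :: "(nat \<Rightarrow> real \<Rightarrow> real) \<Rightarrow> real \<Rightarrow> bool" where
  "periodic_point f x \<longleftrightarrow> (\<exists>n\<ge>1. \<forall>k\<ge>1. iter_seq f (n * k) x = x)"

definition sensitive :: "real set \<Rightarrow> (nat \<Rightarrow> real \<Rightarrow> real) \<Rightarrow> bool" where
  "sensitive J f \<longleftrightarrow> (\<exists>\<delta>>0. \<forall>x\<in>J. \<forall>U. openin (top_of_set J) U \<and> x \<in> U \<longrightarrow>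
      (\<exists>y\<in>U. \<exists>n\<ge>1. \<bar>iter_seq f n x - iter_seq f n y\<bar> > \<delta>))"

definition devaney_chaotic :: "real set \<Rightarrow> (nat \<Rightarrow> real \<Rightarrow> real) \<Rightarrow> bool" where
  "devaney_chaotic J f \<longleftrightarrow> top_transitive J f
     \<and> J \<subseteq> closure {x\<in>J. periodic_point f x}
     \<and> sensitive J f"

end

theory Submission
  imports Defs
begin

lemma lin_aux: "(x::real) \<le> d \<Longrightarrow> y \<le> d \<Longrightarrow> t - p \<le> x \<Longrightarrow> q - t \<le> y \<Longrightarrow> p - a < d \<Longrightarrow> -d < q - b \<Longrightarrow> b - a = 4*d \<Longrightarrow> False"
  by linarith
lemma sens_aux: fixes p q a b t :: real
  assumes "\<bar>p - a\<bar> < (b-a)/4" "\<bar>q - b\<bar> < (b-a)/4" "a<b"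
  shows "(b-a)/4 < \<bar>t-p\<bar> \<or> (b-a)/4 < \<bar>t-q\<bar>"
proof (rule ccontr)
  assume "\<not> ?thesis"
  then have 1: "\<bar>t-p\<bar> \<le> (b-a)/4" "\<bar>t-q\<bar> \<le> (b-a)/4" by auto
  have 2: "t - p \<le> \<bar>t-p\<bar>" "q - t \<le> \<bar>t-q\<bar>" by auto
  have 3: "p - a < (b-a)/4" "-((b-a)/4) < q - b" using assms(1,2) by (simp_all only: abs_less_iff) linarith+
  show False by (rule lin_aux[OF 1 2 3]) simp
qed

lemma wmD:
  assumes "weakly_mixing J f" "openin (top_of_set J) U1" "U1 \<noteq> {}" "openin (top_of_set J) U2" "U2 \<noteq> {}"
    "openin (top_of_set J) V1" "V1 \<noteq> {}" "openin (top_of_set J) V2" "V2 \<noteq> {}"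
  shows "\<exists>n\<ge>1. iter_seq f n ` U1 \<inter> V1 \<noteq> {} \<and> iter_seq f n ` U2 \<inter> V2 \<noteq> {}"
  using assms unfolding weakly_mixing_def by blast

fun blk :: "(nat \<Rightarrow> real \<Rightarrow> real) \<Rightarrow> nat \<Rightarrow> nat \<Rightarrow> real \<Rightarrow> real" where
  "blk f a 0 = id"
| "blk f a (Suc b) = f (a + Suc b) \<circ> blk f a b"

lemma iter_add: "iter_seq f (a + b) = blk f a b \<circ> iter_seq f a"
  by (induction b) (auto simp: comp_assoc)

lemma blk0: "blk f 0 b = iter_seq f b"
  by (induction b) auto

context
  fixes J :: "real set" and f :: "nat \<Rightarrow> real \<Rightarrow> real" and m :: nat
  assumes cont: "\<And>n. n \<ge> 1 \<Longrightarrow> continuous_on J (f n)"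
    and surj: "\<And>n. n \<ge> 1 \<Longrightarrow> f n ` J = J"
    and comm: "commutative_seq J f"
    and per: "periodic_seq J m f"
begin

lemma fJ: "n \<ge> 1 \<Longrightarrow> x \<in> J \<Longrightarrow> f n x \<in> J"
  using surj by blast

lemma iterJ: "x \<in> J \<Longrightarrow> iter_seq f n x \<in> J"
  by (induction n) (auto intro: fJ)

lemma blkJ: "x \<in> J \<Longrightarrow> blk f a b x \<in> J"
  by (induction b) (auto intro: fJ)

lemma blk_surj: "blk f a b ` J = J"
proof (induction b)
  case 0 then show ?case by simp
next
  case (Suc b)
  have "blk f a (Suc b) ` J = f (a + Suc b) ` (blk f a b ` J)"
    by (simp add: image_comp)
  also have "\<dots> = J" using Suc surj[of "a + Suc b"] by simp
  finally show ?case .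
qed

lemma blk_cont: "continuous_on J (blk f a b)"
proof (induction b)
  case 0 then show ?case by (simp add: continuous_on_id)
next
  case (Suc b)
  have "continuous_on (blk f a b ` J) (f (a + Suc b))"
    using blk_surj cont[of "a + Suc b"] by simp
  then show ?case using Suc continuous_on_compose[of J "blk f a b" "f (a + Suc b)"] by (simp add: o_def)
qed

lemma iter_cont: "continuous_on J (iter_seq f n)"
  using blk_cont[of 0 n] by (simp add: blk0)

lemma m_pos: "m \<ge> 1" using per unfolding periodic_seq_def by simp

lemma f_per: "j \<ge> 1 \<Longrightarrow> x \<in> J \<Longrightarrow> f (k * m + j) x = f j x"
proof (induction k)
  case 0 then show ?case by simp
next
  case (Suc k)
  have "f (Suc k * m + j) x = f ((k * m + j) + m) x" by (simp add: algebra_simps)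
  also have "\<dots> = f (k * m + j) x" using per Suc.prems unfolding periodic_seq_def by simp
  finally show ?case using Suc by simp
qed

lemma blk_mod: "x \<in> J \<Longrightarrow> blk f a b x = blk f (a mod m) b x"
proof (induction b)
  case 0 then show ?case by simp
next
  case (Suc b)
  have e: "a + Suc b = (a div m) * m + (a mod m + Suc b)" by simp
  have "blk f a (Suc b) x = f (a + Suc b) (blk f a b x)" by simp
  also have "\<dots> = f (a mod m + Suc b) (blk f a b x)"
    by (subst e, rule f_per) (auto intro: blkJ Suc.prems)
  finally show ?case using Suc by simp
qed

lemma iter_mult: "m dvd a \<Longrightarrow> x \<in> J \<Longrightarrow> iter_seq f (a + b) x = iter_seq f b (iter_seq f a x)"
  using blk_mod[of "iter_seq f a x" a b] iterJ[of x a]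
  by (simp add: iter_add blk0)

lemma f_comm_iter: "i \<ge> 1 \<Longrightarrow> x \<in> J \<Longrightarrow> f i (iter_seq f j x) = iter_seq f j (f i x)"
proof (induction j)
  case 0 then show ?case by simp
next
  case (Suc j)
  have "f i (iter_seq f (Suc j) x) = f i (f (Suc j) (iter_seq f j x))" by simp
  also have "\<dots> = f (Suc j) (f i (iter_seq f j x))"
    using comm Suc.prems iterJ unfolding commutative_seq_def by auto
  finally show ?case using Suc by simp
qed

lemma iter_comm: "x \<in> J \<Longrightarrow> iter_seq f n (iter_seq f j x) = iter_seq f j (iter_seq f n x)"
proof (induction n)
  case 0 then show ?case by simp
next
  case (Suc n)
  then show ?case using f_comm_iter[of "Suc n" "iter_seq f n x" j] iterJ by simp
qed


lemma multi:
  assumes wm: "weakly_mixing J f"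
  shows "(\<forall>i<Suc k. openin (top_of_set J) (U i) \<and> U i \<noteq> {} \<and> openin (top_of_set J) (V i) \<and> V i \<noteq> {})
    \<Longrightarrow> \<exists>n\<ge>1. \<forall>i<Suc k. iter_seq f n ` U i \<inter> V i \<noteq> {}"
proof (induction k arbitrary: U V)
  case 0
  then have "openin (top_of_set J) (U 0)" "U 0 \<noteq> {}" "openin (top_of_set J) (V 0)" "V 0 \<noteq> {}" by auto
  from wmD[OF wm, of "U 0" "U 0" "V 0" "V 0"] this show ?case by auto
next
  case (Suc k)
  have hk: "openin (top_of_set J) (U k) \<and> U k \<noteq> {} \<and> openin (top_of_set J) (V k) \<and> V k \<noteq> {}"
    and hs: "openin (top_of_set J) (U (Suc k)) \<and> U (Suc k) \<noteq> {} \<and> openin (top_of_set J) (V (Suc k)) \<and> V (Suc k) \<noteq> {}"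
    using Suc.prems by auto
  obtain j where j: "j \<ge> 1" "iter_seq f j ` U k \<inter> U (Suc k) \<noteq> {}" "iter_seq f j ` V k \<inter> V (Suc k) \<noteq> {}"
    using wmD[OF wm, of "U k" "V k" "U (Suc k)" "V (Suc k)"] hk hs by blast
  define A where "A = U k \<inter> (J \<inter> iter_seq f j -` U (Suc k))"
  define B where "B = V k \<inter> (J \<inter> iter_seq f j -` V (Suc k))"
  have ij: "iter_seq f j \<in> J \<rightarrow> J" using iterJ by auto
  have oA: "openin (top_of_set J) A" unfolding A_def
    using hk hs continuous_openin_preimage[OF iter_cont ij] by blast
  have oB: "openin (top_of_set J) B" unfolding B_def
    using hk hs continuous_openin_preimage[OF iter_cont ij] by blast
  have UkJ: "U k \<subseteq> J" "V k \<subseteq> J" using hk openin_imp_subset by auto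
  have nA: "A \<noteq> {}" using j(2) UkJ unfolding A_def by auto
  have nB: "B \<noteq> {}" using j(3) UkJ unfolding B_def by auto
  define U' where "U' = U(k := A)"
  define V' where "V' = V(k := B)"
  have "\<forall>i<Suc k. openin (top_of_set J) (U' i) \<and> U' i \<noteq> {} \<and> openin (top_of_set J) (V' i) \<and> V' i \<noteq> {}"
    using Suc.prems oA oB nA nB unfolding U'_def V'_def by auto
  then obtain n where n: "n \<ge> 1" "\<forall>i<Suc k. iter_seq f n ` U' i \<inter> V' i \<noteq> {}"
    using Suc.IH by blast
  have "\<forall>i<Suc (Suc k). iter_seq f n ` U i \<inter> V i \<noteq> {}"
  proof (intro allI impI)
    fix i assume i: "i < Suc (Suc k)"
    have "iter_seq f n ` U' k \<inter> V' k \<noteq> {}" using n(2) by simp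
    then obtain a where a: "a \<in> A" "iter_seq f n a \<in> B"
      unfolding U'_def V'_def by auto
    show "iter_seq f n ` U i \<inter> V i \<noteq> {}"
    proof (cases "i = Suc k")
      case True
      have aJ: "a \<in> J" using a(1) unfolding A_def by auto
      have "iter_seq f j (iter_seq f n a) \<in> V (Suc k)" using a(2) unfolding B_def by auto
      then have "iter_seq f n (iter_seq f j a) \<in> V (Suc k)" using iter_comm[OF aJ] by simp
      moreover have "iter_seq f j a \<in> U (Suc k)" using a(1) unfolding A_def by auto
      ultimately show ?thesis using True by blast
    next
      case False
      show ?thesis
      proof (cases "i = k")
        case True
        then show ?thesis using a unfolding A_def B_def by auto
      next
        case False
        then have "i < Suc k" using \<open>i \<noteq> Suc k\<close> i by auto
        then have "iter_seq f n ` U' i \<inter> V' i \<noteq> {}" using n(2) by blast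
        then show ?thesis using False unfolding U'_def V'_def by simp
      qed
    qed
  qed
  then show ?case using n(1) by blast
qed

end

theorem mainTheorem16:
  fixes J :: "real set" and f :: "nat \<Rightarrow> real \<Rightarrow> real" and m :: nat
  assumes "nondegenerate_interval J"
    and "\<And>n. n \<ge> 1 \<Longrightarrow> continuous_on J (f n)"
    and "\<And>n. n \<ge> 1 \<Longrightarrow> f n ` J = J"
    and "commutative_seq J f"
    and "periodic_seq J m f"
    and "weakly_mixing J f"
  shows "devaney_chaotic J f"
proof -
  note A = assms(2-5)
  have wm: "weakly_mixing J f" by fact
  obtain a b where ab: "a \<in> J" "b \<in> J" "a < b" and ivl: "is_interval J"
    using assms(1) unfolding nondegenerate_interval_def by blast
  have ivl1: "\<And>x y z. x \<in> J \<Longrightarrow> y \<in> J \<Longrightarrow> x \<le> z \<Longrightarrow> z \<le> y \<Longrightarrow> z \<in> J"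
    using ivl unfolding is_interval_1 by blast
  have TT: "top_transitive J f"
    unfolding top_transitive_def
  proof (intro allI impI)
    fix U V assume h: "openin (top_of_set J) U \<and> U \<noteq> {} \<and> openin (top_of_set J) V \<and> V \<noteq> {}"
    then show "\<exists>n\<ge>1. iter_seq f n ` U \<inter> V \<noteq> {}"
      using wmD[OF wm, of U U V V] by blast
  qed
  have SS: "sensitive J f"
    unfolding sensitive_def
  proof (intro exI[of _ "(b - a) / 4"] conjI ballI allI impI)
    show "(b - a) / 4 > 0" using ab by simp
    fix x U assume x: "x \<in> J" and U: "openin (top_of_set J) U \<and> x \<in> U"
    define d where "d = (b - a) / 4"
    have o1: "openin (top_of_set J) (J \<inter> ball a d)" and o2: "openin (top_of_set J) (J \<inter> ball b d)"
      by auto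
    have n1: "J \<inter> ball a d \<noteq> {}" and n2: "J \<inter> ball b d \<noteq> {}"
      using ab by (auto simp: d_def)
    obtain n where n: "n \<ge> 1" "iter_seq f n ` U \<inter> (J \<inter> ball a d) \<noteq> {}"
      "iter_seq f n ` U \<inter> (J \<inter> ball b d) \<noteq> {}"
      using wmD[OF wm, of U U "J \<inter> ball a d" "J \<inter> ball b d"] o1 o2 n1 n2 U by blast
    obtain y1 where y10: "y1 \<in> U" "dist a (iter_seq f n y1) < d"
      using n(2) by auto
    then have y1: "y1 \<in> U" "\<bar>iter_seq f n y1 - a\<bar> < d"
      by (auto simp: dist_real_def abs_minus_commute)
    obtain y2 where y20: "y2 \<in> U" "dist b (iter_seq f n y2) < d"
      using n(3) by auto
    then have y2: "y2 \<in> U" "\<bar>iter_seq f n y2 - b\<bar> < d"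
      by (auto simp: dist_real_def abs_minus_commute)
    have "(b - a) / 4 < \<bar>iter_seq f n x - iter_seq f n y1\<bar> \<or> (b - a) / 4 < \<bar>iter_seq f n x - iter_seq f n y2\<bar>"
      by (rule sens_aux[OF y1(2)[unfolded d_def] y2(2)[unfolded d_def] ab(3)])
    then show "\<exists>y\<in>U. \<exists>n\<ge>1. \<bar>iter_seq f n x - iter_seq f n y\<bar> > (b - a) / 4"
      using y1(1) y2(1) n(1) by blast
  qed
  have PP: "J \<subseteq> closure {x\<in>J. periodic_point f x}"
  proof
    fix x0 assume x0: "x0 \<in> J"
    show "x0 \<in> closure {x\<in>J. periodic_point f x}"
      unfolding closure_approachable
    proof (intro allI impI)
      fix e :: real assume e: "e > 0"
      obtain u v where uv: "u < v" "{u..v} \<subseteq> J" "\<And>y. y \<in> {u..v} \<Longrightarrow> \<bar>y - x0\<bar> < e"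
      proof (cases "x0 < b")
        case True
        show ?thesis
        proof (rule that[of x0 "min b (x0 + e/2)"])
          show "x0 < min b (x0 + e/2)" using True e by simp
          show "{x0..min b (x0 + e/2)} \<subseteq> J"
          proof
            fix y assume "y \<in> {x0..min b (x0 + e/2)}"
            then have "x0 \<le> y" "y \<le> b" by auto
            then show "y \<in> J" using ivl1[OF x0 ab(2)] by blast
          qed
          fix y assume "y \<in> {x0..min b (x0 + e/2)}"
          then have "x0 \<le> y" "y \<le> x0 + e/2" by auto
          then show "\<bar>y - x0\<bar> < e" using e by linarith
        qed
      next
        case False
        show ?thesis
        proof (rule that[of "max a (x0 - e/2)" x0])
          show "max a (x0 - e/2) < x0" using False ab e by simp
          show "{max a (x0 - e/2)..x0} \<subseteq> J"
          proof
            fix y assume "y \<in> {max a (x0 - e/2)..x0}"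
            then have "a \<le> y" "y \<le> x0" by auto
            then show "y \<in> J" using ivl1[OF ab(1) x0] by blast
          qed
          fix y assume "y \<in> {max a (x0 - e/2)..x0}"
          then have "x0 - e/2 \<le> y" "y \<le> x0" by auto
          then show "\<bar>y - x0\<bar> < e" using e by linarith
        qed
      qed
      define w where "w = (v - u) / 4"
      have w: "w > 0" using uv unfolding w_def by simp
      have wv: "v = u + 4 * w" unfolding w_def by (simp add: field_simps)
      define Ls where "Ls = {u<..<u+w}"
      define Is where "Is = {u+w<..<u+3*w}"
      define Rs where "Rs = {u+3*w<..<v}"
      have LsU: "Ls \<subseteq> {u..v}" and IsU: "Is \<subseteq> {u..v}" and RsU: "Rs \<subseteq> {u..v}"
        using w wv unfolding Ls_def Is_def Rs_def by auto
      have LsJ: "Ls \<subseteq> J" and IsJ: "Is \<subseteq> J" and RsJ: "Rs \<subseteq> J"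
        using LsU IsU RsU uv(2) by auto
      have oL: "openin (top_of_set J) Ls" by (rule open_subset[OF LsJ]) (simp add: Ls_def)
      have oI: "openin (top_of_set J) Is" by (rule open_subset[OF IsJ]) (simp add: Is_def)
      have oR: "openin (top_of_set J) Rs" by (rule open_subset[OF RsJ]) (simp add: Rs_def)
      have neL: "Ls \<noteq> {}" and neI: "Is \<noteq> {}" and neR: "Rs \<noteq> {}"
        using w wv unfolding Ls_def Is_def Rs_def by auto
      define Pre where "Pre r Z = J \<inter> blk f r (m - r) -` Z" for r Z
      have oPre: "openin (top_of_set J) (Pre r Z)" if "openin (top_of_set J) Z" for r Z
      proof -
        have "blk f r (m - r) \<in> J \<rightarrow> J" using blkJ[OF A] by auto
        then show ?thesis unfolding Pre_def
          using continuous_openin_preimage[OF blk_cont[OF A] _ that] by blast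
      qed
      have nePre: "Pre r Z \<noteq> {}" if zJ: "Z \<subseteq> J" and zne: "Z \<noteq> {}" for r Z
      proof -
        obtain z where "z \<in> Z" using zne by auto
        then have "z \<in> blk f r (m - r) ` J" using blk_surj[OF A] zJ by auto
        then show ?thesis unfolding Pre_def using \<open>z \<in> Z\<close> by auto
      qed
      have m1: "m \<ge> 1" using m_pos[OF A] .
      define Uf where "Uf = (\<lambda>i::nat. Is)"
      define Vf where "Vf = (\<lambda>i. if i < m then Pre i Ls else Pre (i - m) Rs)"
      have "\<forall>i<Suc (2*m - 1). openin (top_of_set J) (Uf i) \<and> Uf i \<noteq> {} \<and> openin (top_of_set J) (Vf i) \<and> Vf i \<noteq> {}"
        unfolding Uf_def Vf_def using oI neI oPre oL oR nePre LsJ RsJ neL neR by auto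
      then obtain n where n: "n \<ge> 1" "\<forall>i<Suc (2*m - 1). iter_seq f n ` Uf i \<inter> Vf i \<noteq> {}"
        using multi[OF A wm] by blast
      define r where "r = n mod m"
      have rm: "r < m" using m1 unfolding r_def by simp
      have "iter_seq f n ` Uf r \<inter> Vf r \<noteq> {}" using n(2) rm m1 by auto
      then obtain y1 where y1: "y1 \<in> Is" "iter_seq f n y1 \<in> Pre r Ls"
        unfolding Uf_def Vf_def using rm by auto
      have "iter_seq f n ` Uf (m + r) \<inter> Vf (m + r) \<noteq> {}" using n(2) rm m1 by auto
      then obtain y2 where y2: "y2 \<in> Is" "iter_seq f n y2 \<in> Pre r Rs"
        unfolding Uf_def Vf_def using rm by auto
      define N where "N = n + (m - r)"
      have TN: "iter_seq f N y = blk f r (m - r) (iter_seq f n y)" if "y \<in> J" for y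
        using iter_add[of f n "m - r"] blk_mod[OF A iterJ[OF A that], of n "m - r"]
        unfolding N_def r_def by simp
      have Ndvd: "m dvd N"
      proof -
        have "n div m * m + r = n" unfolding r_def by simp
        then have "N = (n div m + 1) * m" unfolding N_def using rm by (simp add: algebra_simps)
        then show ?thesis by simp
      qed
      have N1: "N \<ge> 1" unfolding N_def using rm by simp
      have y1J: "y1 \<in> J" and y2J: "y2 \<in> J" using y1 y2 IsJ by auto
      have h1: "iter_seq f N y1 - y1 < 0"
        using TN[OF y1J] y1 unfolding Pre_def Ls_def Is_def by auto
      have h2: "iter_seq f N y2 - y2 > 0"
        using TN[OF y2J] y2 unfolding Pre_def Rs_def Is_def by auto
      have cphi: "continuous_on J (\<lambda>x. iter_seq f N x - x)"
        by (intro continuous_on_diff iter_cont[OF A] continuous_on_id)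
      obtain x where x: "x \<in> Is" "iter_seq f N x - x = 0"
      proof (cases "y1 \<le> y2")
        case True
        have "{y1..y2} \<subseteq> J" using ivl1[OF y1J y2J] by auto
        then have "continuous_on {y1..y2} (\<lambda>x. iter_seq f N x - x)"
          using cphi continuous_on_subset by blast
        then obtain x where "y1 \<le> x" "x \<le> y2" "iter_seq f N x - x = 0"
          using IVT'[of "\<lambda>x. iter_seq f N x - x" y1 0 y2] h1 h2 True by auto
        then show ?thesis using y1(1) y2(1) by (intro that[of x]) (auto simp: Is_def)
      next
        case False
        have "{y2..y1} \<subseteq> J" using ivl1[OF y2J y1J] by auto
        then have "continuous_on {y2..y1} (\<lambda>x. iter_seq f N x - x)"
          using cphi continuous_on_subset by blast
        then obtain x where "y2 \<le> x" "x \<le> y1" "iter_seq f N x - x = 0"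
          using IVT2'[of "\<lambda>x. iter_seq f N x - x" y1 0 y2] h1 h2 False by auto
        then show ?thesis using y1(1) y2(1) by (intro that[of x]) (auto simp: Is_def)
      qed
      have xJ: "x \<in> J" using x IsJ by auto
      have fx: "iter_seq f N x = x" using x by simp
      have "iter_seq f (N * k) x = x" for k
      proof (induction k)
        case 0 then show ?case by simp
      next
        case (Suc k)
        have "iter_seq f (N * Suc k) x = iter_seq f (N + N * k) x" by simp
        also have "\<dots> = iter_seq f (N * k) (iter_seq f N x)" using iter_mult[OF A Ndvd xJ] .
        finally show ?case using fx Suc by simp
      qed
      then have "periodic_point f x" unfolding periodic_point_def using N1 by blast
      moreover have "dist x x0 < e"
        using uv(3)[of x] x w wv unfolding Is_def dist_real_def by auto
      ultimately show "\<exists>y\<in>{x\<in>J. periodic_point f x}. dist y x0 < e" using xJ by blast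
    qed
  qed
  show ?thesis unfolding devaney_chaotic_def using TT SS PP by blast
qed

end
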